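(* (i) Let $d\ge 2$ and let $\rho_{AB}$ be any state on $\mathbb{C}^d\otimes\mathbb{C}^2$ (Alice holds the qudit, Bob the qubit). Let $\rho_A=\operatorname{Tr}_B[\rho_{AB}]$, $\mu_1\in[0,\tfrac{1}{\sqrt3}]$, and $\tau^1_{AB}=\mu_1\rho_{AB}+(1-\mu_1)\rho_A\otimes\tfrac{\mathbb{I}_2}{2}$. If $\tau^1_{AB}$ is entangled, then $\rho_{AB}$ is EPR steerable from Bob to Alice. (ii) Let $d\ge 2$ and let $\rho_{AB}$ be any state on $\mathbb{C}^2\otimes\mathbb{C}^d$ (Alice holds the qubit, Bob the qudit). Let $\rho_B=\operatorname{Tr}_A[\rho_{AB}]$, $\mu_2\in[0,\tfrac{1}{\sqrt3}]$, and $\tau^2_{AB}=\mu_2\rho_{AB}+(1-\mu_2)\tfrac{\mathbb{I}_2}{2}\otimes\rho_B$. If $\tau^2_{AB}$ is entangled, then $\rho_{AB}$ is EPR steerable from Alice to Bob.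
   Context: $\mathbb{I}_2$ is the $2\times2$ identity. Measurements are arbitrary POVMs $A=\{M^A_a\}$ on Alice's system and $B=\{M^B_b\}$ on Bob's system, with $P(a,b|A,B,\rho_{AB})=\operatorname{Tr}[(M^A_a\otimes M^B_b)\rho_{AB}]$. $\rho_{AB}$ is NOT EPR steerable from Bob to Alice iff there exist a distribution $P(\lambda)$, quantum states $\rho^A_\lambda$ on Alice's system and arbitrary distributions $P(b|B,\lambda)$ with $P(a,b|A,B,\rho_{AB})=\sum_\lambda P(\lambda)\operatorname{Tr}[\rho^A_\lambda M^A_a]P(b|B,\lambda)$ for all $A,B,a,b$; otherwise it is steerable from Bob to Alice. $\rho_{AB}$ is NOT EPR steerable from Alice to Bob iff there exist $P(\lambda)$, arbitrary distributions $P(a|A,\lambda)$ and quantum states $\rho^B_\lambda$ on Bob's system with $P(a,b|A,B,\rho_{AB})=\sum_\lambda P(\lambda)P(a|A,\lambda)\operatorname{Tr}[\rho^B_\lambda M^B_b]$ for all $A,B,a,b$; otherwise it is steerable from Alice to Bob. A bipartite state is separable if it is a convex combination of product states $\rho^A_\lambda\otimes\rho^B_\lambda$, and entangled otherwise. *)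

theory Defs
  imports "HOL-Analysis.Analysis" "HOL-Probability.Probability_Mass_Function"
begin

text \<open>Operators on a finite-dimensional Hilbert space with orthonormal basis indexed by
  the finite type 'n are complex 'n x 'n matrices. The qubit space is indexed by type 2,
  the qudit space by a finite type 'd with CARD('d) = d. The composite space of Alice ('a)
  and Bob ('b) is indexed by 'a \<times> 'b.\<close>

type_synonym 'n cmat = "complex ^ 'n ^ 'n"

definition mtrace :: "'n::finite cmat \<Rightarrow> complex" where
  "mtrace M = (\<Sum>i\<in>UNIV. M $ i $ i)"

definition psd :: "'n::finite cmat \<Rightarrow> bool" where
  "psd M \<longleftrightarrow> (\<forall>v :: complex ^ 'n.
     let q = (\<Sum>i\<in>UNIV. \<Sum>j\<in>UNIV. cnj (v $ i) * M $ i $ j * v $ j)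
     in Im q = 0 \<and> Re q \<ge> 0)"

definition qstate :: "'n::finite cmat \<Rightarrow> bool" where
  "qstate \<rho> \<longleftrightarrow> psd \<rho> \<and> mtrace \<rho> = 1"

text \<open>A POVM with finitely many outcomes 0..<n: effects M 0, ..., M (n-1).\<close>
type_synonym 'n povm = "nat \<times> (nat \<Rightarrow> 'n cmat)"

definition is_povm :: "'n::finite povm \<Rightarrow> bool" where
  "is_povm A \<longleftrightarrow> (\<forall>a < fst A. psd (snd A a)) \<and> (\<Sum>a<fst A. snd A a) = mat 1"

definition kron :: "'a::finite cmat \<Rightarrow> 'b::finite cmat \<Rightarrow> ('a \<times> 'b) cmat" where
  "kron X Y = (\<chi> ij kl. X $ fst ij $ fst kl * Y $ snd ij $ snd kl)"

definition ptrace_B :: "('a::finite \<times> 'b::finite) cmat \<Rightarrow> 'a cmat" where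
  "ptrace_B \<rho> = (\<chi> i k. \<Sum>j\<in>UNIV. \<rho> $ (i, j) $ (k, j))"

definition ptrace_A :: "('a::finite \<times> 'b::finite) cmat \<Rightarrow> 'b cmat" where
  "ptrace_A \<rho> = (\<chi> j l. \<Sum>i\<in>UNIV. \<rho> $ (i, j) $ (i, l))"

definition joint_prob ::
  "('a::finite \<times> 'b::finite) cmat \<Rightarrow> 'a povm \<Rightarrow> 'b povm \<Rightarrow> nat \<Rightarrow> nat \<Rightarrow> complex" where
  "joint_prob \<rho> A B a b = mtrace (kron (snd A a) (snd B b) ** \<rho>)"

definition separable :: "('a::finite \<times> 'b::finite) cmat \<Rightarrow> bool" where
  "separable \<rho> \<longleftrightarrow> (\<exists>(n::nat) (p::nat \<Rightarrow> real) \<sigma>A \<sigma>B.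
      (\<forall>i<n. p i \<ge> 0 \<and> qstate (\<sigma>A i) \<and> qstate (\<sigma>B i)) \<and> (\<Sum>i<n. p i) = 1 \<and>
      \<rho> = (\<Sum>i<n. p i *\<^sub>R kron (\<sigma>A i) (\<sigma>B i)))"

definition entangled :: "('a::finite \<times> 'b::finite) cmat \<Rightarrow> bool" where
  "entangled \<rho> \<longleftrightarrow> \<not> separable \<rho>"

definition response :: "('n::finite povm \<Rightarrow> 'l \<Rightarrow> nat \<Rightarrow> real) \<Rightarrow> bool" where
  "response r \<longleftrightarrow> (\<forall>X l. is_povm X \<longrightarrow>
      (\<forall>x < fst X. r X l x \<ge> 0) \<and> (\<Sum>x<fst X. r X l x) = 1)"

text \<open>Not steerable from Bob to Alice: a local hidden state model for Alice
  (hidden variable of type 'l, discrete distribution P(\<lambda>) given as a pmf).\<close>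
definition unsteerable_B_to_A ::
  "'l itself \<Rightarrow> ('a::finite \<times> 'b::finite) cmat \<Rightarrow> bool" where
  "unsteerable_B_to_A _ \<rho> \<longleftrightarrow> (\<exists>(P :: 'l pmf) (\<sigma> :: 'l \<Rightarrow> 'a cmat) (r :: 'b povm \<Rightarrow> 'l \<Rightarrow> nat \<Rightarrow> real).
      (\<forall>l. qstate (\<sigma> l)) \<and> response r \<and>
      (\<forall>A B a b. is_povm A \<longrightarrow> is_povm B \<longrightarrow> a < fst A \<longrightarrow> b < fst B \<longrightarrow>
         joint_prob \<rho> A B a b =
           complex_of_real (measure_pmf.expectation P
             (\<lambda>l. Re (mtrace (\<sigma> l ** snd A a)) * r B l b))))"

definition unsteerable_A_to_B ::
  "'l itself \<Rightarrow> ('a::finite \<times> 'b::finite) cmat \<Rightarrow> bool" where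
  "unsteerable_A_to_B _ \<rho> \<longleftrightarrow> (\<exists>(P :: 'l pmf) (r :: 'a povm \<Rightarrow> 'l \<Rightarrow> nat \<Rightarrow> real) (\<sigma> :: 'l \<Rightarrow> 'b cmat).
      (\<forall>l. qstate (\<sigma> l)) \<and> response r \<and>
      (\<forall>A B a b. is_povm A \<longrightarrow> is_povm B \<longrightarrow> a < fst A \<longrightarrow> b < fst B \<longrightarrow>
         joint_prob \<rho> A B a b =
           complex_of_real (measure_pmf.expectation P
             (\<lambda>l. r A l a * Re (mtrace (\<sigma> l ** snd B b))))))"

abbreviation steerable_B_to_A where
  "steerable_B_to_A L \<rho> \<equiv> \<not> unsteerable_B_to_A L \<rho>"
abbreviation steerable_A_to_B where
  "steerable_A_to_B L \<rho> \<equiv> \<not> unsteerable_A_to_B L \<rho>"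

end

theory Submission
  imports Defs
begin


definition qf :: "'n::finite cmat \<Rightarrow> complex^'n \<Rightarrow> complex" where
  "qf M v = (\<Sum>i\<in>UNIV. \<Sum>j\<in>UNIV. cnj (v $ i) * M $ i $ j * v $ j)"

lemma psd_qf: "psd M \<longleftrightarrow> (\<forall>v. Im (qf M v) = 0 \<and> Re (qf M v) \<ge> 0)"
  unfolding psd_def qf_def Let_def by simp

definition vec2 :: "'n::finite \<Rightarrow> 'n \<Rightarrow> complex \<Rightarrow> complex \<Rightarrow> complex^'n" where
  "vec2 i j a b = (\<chi> k. (if k = i then a else 0) + (if k = j then b else 0))"

lemma cif1: "(x::complex) * (if P then a else 0) = (if P then x * a else 0)" by simp
lemma cif2: "(if P then a else 0) * (x::complex) = (if P then a * x else 0)" by simp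
lemma cif3: "cnj (if P then a else 0) = (if P then cnj a else 0)" by simp

lemma sum_vec2_r: "(\<Sum>l\<in>UNIV. c l * (vec2 i j a b) $ l) = c i * a + c j * b"
  unfolding vec2_def by (simp add: distrib_left sum.distrib cif1)
lemma sum_vec2_l: "(\<Sum>l\<in>UNIV. cnj ((vec2 i j a b) $ l) * c l) = cnj a * c i + cnj b * c j"
  unfolding vec2_def by (simp add: distrib_right sum.distrib cif2 cif3)

lemma qf_vec2:
  shows "qf M (vec2 i j a b) = cnj a * a * M$i$i + cnj a * b * M$i$j + cnj b * a * M$j$i + cnj b * b * M$j$j"
proof -
  have "qf M (vec2 i j a b) = (\<Sum>k\<in>UNIV. cnj ((vec2 i j a b) $ k) * (\<Sum>l\<in>UNIV. M$k$l * (vec2 i j a b) $ l))"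
    unfolding qf_def by (simp add: sum_distrib_left mult.assoc)
  also have "\<dots> = (\<Sum>k\<in>UNIV. cnj ((vec2 i j a b) $ k) * (M$k$i * a + M$k$j * b))"
    by (simp add: sum_vec2_r)
  also have "\<dots> = cnj a * (M$i$i * a + M$i$j * b) + cnj b * (M$j$i * a + M$j$j * b)"
    by (rule sum_vec2_l)
  finally show ?thesis by (simp add: algebra_simps)
qed

lemma qf_vec1: "qf M (vec2 i j 1 0) = M$i$i"
  by (simp add: qf_vec2)

lemma qstate_diag:
  assumes "qstate M"
  shows "Im (M$i$i) = 0 \<and> 0 \<le> Re (M$i$i) \<and> Re (M$i$i) \<le> 1"
proof -
  have p: "psd M" and t: "mtrace M = 1" using assms by (auto simp: qstate_def)
  have d: "\<And>k. Im (M$k$k) = 0 \<and> 0 \<le> Re (M$k$k)"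
    using p unfolding psd_qf by (metis qf_vec1)
  have "Re (mtrace M) = (\<Sum>k\<in>UNIV. Re (M$k$k))" by (simp add: mtrace_def Re_sum)
  hence s: "(\<Sum>k\<in>UNIV. Re (M$k$k)) = 1" using t by simp
  have "Re (M$i$i) \<le> (\<Sum>k\<in>UNIV. Re (M$k$k))"
    by (rule member_le_sum) (auto simp: d)
  thus ?thesis using d s by simp
qed

lemma qstate_bound:
  assumes "qstate M"
  shows "cmod (M$i$j) \<le> 2"
proof (cases "i = j")
  case True
  then show ?thesis using qstate_diag[OF assms, of i] cmod_le[of "M$i$i"] by simp
next
  case False
  have p: "psd M" using assms by (auto simp: qstate_def)
  have di: "Im (M$i$i) = 0" "0 \<le> Re (M$i$i)" "Re (M$i$i) \<le> 1"
    and dj: "Im (M$j$j) = 0" "0 \<le> Re (M$j$j)" "Re (M$j$j) \<le> 1"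
    using qstate_diag[OF assms] by auto
  have h: "\<And>b. Im (qf M (vec2 i j 1 b)) = 0 \<and> 0 \<le> Re (qf M (vec2 i j 1 b))"
    using p unfolding psd_qf by blast
  note h1 = h[of 1, unfolded qf_vec2]
  note h2 = h[of "-1", unfolded qf_vec2]
  note h3 = h[of "\<i>", unfolded qf_vec2]
  note h4 = h[of "-\<i>", unfolded qf_vec2]
  have "\<bar>Re (M$i$j)\<bar> \<le> 1" "\<bar>Im (M$i$j)\<bar> \<le> 1"
    using h1 h2 h3 h4 di dj by (auto simp: abs_le_iff)
  then show ?thesis using cmod_le[of "M$i$j"] by simp
qed

lemma int_bdd:
  fixes f :: "'l \<Rightarrow> 'b::{banach, second_countable_topology}"
  assumes "\<And>l. norm (f l) \<le> B"
  shows "integrable (measure_pmf P) f"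
  by (rule measure_pmf.integrable_const_bound[where B=B]) (auto simp: assms measurable_pmf_measure1)

lemma resp_bounds:
  assumes "response r" "is_povm X" "x < fst X"
  shows "0 \<le> r X l x \<and> r X l x \<le> 1"
proof -
  have a: "\<forall>y<fst X. 0 \<le> r X l y" and s: "(\<Sum>y<fst X. r X l y) = 1"
    using assms(1,2) unfolding response_def by blast+
  have "r X l x \<le> (\<Sum>y<fst X. r X l y)"
    by (rule member_le_sum) (use a assms in auto)
  thus ?thesis using a s assms by auto
qed



definition unitv :: "complex^'n::finite \<Rightarrow> bool" where
  "unitv v \<longleftrightarrow> (\<Sum>i\<in>UNIV. (cmod (v$i))^2) = 1"

definition proj :: "complex^'n::finite \<Rightarrow> 'n cmat" where
  "proj v = (\<chi> i j. v$i * cnj (v$j))"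

definition pov :: "complex^'n::finite \<Rightarrow> 'n povm" where
  "pov v = (2, \<lambda>a. if a = 0 then proj v else mat 1 - proj v)"

lemma qf_diff: "qf (A - B) w = qf A w - qf B w"
  unfolding qf_def by (simp add: algebra_simps sum_subtractf)

lemma zcnj: "z * cnj z = (of_real (cmod z))^2"
  by (metis complex_norm_square of_real_power)

lemma qf_mat1: "qf (mat 1) w = of_real (\<Sum>i\<in>UNIV. (cmod (w$i))^2)"
proof -
  have "qf (mat 1) w = (\<Sum>i\<in>UNIV. cnj (w$i) * w$i)"
    unfolding qf_def mat_def by (simp add: cif1 cif2)
  also have "\<dots> = (\<Sum>i\<in>UNIV. of_real ((cmod (w$i))^2))"
    by (simp add: zcnj mult.commute)
  finally show ?thesis by simp
qed

lemma qf_proj: "qf (proj v) w = of_real ((cmod (\<Sum>i\<in>UNIV. cnj (w$i) * v$i))^2)"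
proof -
  let ?z = "\<Sum>i\<in>UNIV. cnj (w$i) * v$i"
  have "qf (proj v) w = ?z * (\<Sum>j\<in>UNIV. cnj (v$j) * w$j)"
    unfolding qf_def proj_def by (simp add: sum_product algebra_simps)
  also have "(\<Sum>j\<in>UNIV. cnj (v$j) * w$j) = cnj ?z"
    by (simp add: cnj_sum mult.commute)
  finally show ?thesis by (simp only: zcnj of_real_power)
qed

lemma psd_proj: "psd (proj v)"
  unfolding psd_qf qf_proj by simp

lemma psd_I_proj:
  assumes "unitv v"
  shows "psd (mat 1 - proj v)"
proof -
  have "\<And>w. (cmod (\<Sum>i\<in>UNIV. cnj (w$i) * v$i))^2 \<le> (\<Sum>i\<in>UNIV. (cmod (w$i))^2)"
  proof -
    fix w :: "complex^'a"
    have "cmod (\<Sum>i\<in>UNIV. cnj (w$i) * v$i) \<le> (\<Sum>i\<in>UNIV. cmod (w$i) * cmod (v$i))"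
      by (rule order_trans[OF norm_sum]) (simp add: norm_mult)
    hence "(cmod (\<Sum>i\<in>UNIV. cnj (w$i) * v$i))^2 \<le> (\<Sum>i\<in>UNIV. cmod (w$i) * cmod (v$i))^2"
      by (rule power_mono) simp
    also have "\<dots> \<le> (\<Sum>i\<in>UNIV. (cmod (w$i))^2) * (\<Sum>i\<in>UNIV. (cmod (v$i))^2)"
      by (rule Cauchy_Schwarz_ineq_sum)
    finally show "?thesis w" using assms by (simp add: unitv_def)
  qed
  thus ?thesis unfolding psd_qf qf_diff qf_mat1 qf_proj by simp
qed

lemma is_povm_pov:
  assumes "unitv v"
  shows "is_povm (pov v)"
  unfolding is_povm_def pov_def
  using psd_proj psd_I_proj[OF assms]
  by (auto simp: numeral_2_eq_2 lessThan_Suc less_Suc_eq)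

lemma unit_e: "unitv (vec2 i i 1 0)"
proof -
  have "\<And>k. (cmod (vec2 i i 1 0 $ k))^2 = (if k = i then 1 else 0)"
    by (simp add: vec2_def)
  thus ?thesis unfolding unitv_def by simp
qed

lemma unit_vec2:
  assumes "i \<noteq> j" "(cmod a)^2 + (cmod b)^2 = 1"
  shows "unitv (vec2 i j a b)"
proof -
  have "\<And>k. (cmod (vec2 i j a b $ k))^2 = (if k = i then (cmod a)^2 else 0) + (if k = j then (cmod b)^2 else 0)"
    using assms(1) by (simp add: vec2_def)
  thus ?thesis unfolding unitv_def using assms(2) by (simp add: sum.distrib)
qed

definition s2 :: complex where "s2 = of_real (1 / sqrt 2)"

lemma s2_sq: "s2 * s2 = 1/2"
proof -
  have "(1 / sqrt 2) * (1 / sqrt (2::real)) = 1/2" by (simp add: power2_eq_square[symmetric] power_divide)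
  hence "of_real ((1 / sqrt 2) * (1 / sqrt (2::real))) = (1/2 :: complex)" by simp
  thus ?thesis unfolding s2_def by (simp only: of_real_mult)
qed

lemma cnj_s2: "cnj s2 = s2" by (simp add: s2_def)

lemma cmod_s2: "(cmod s2)^2 = 1/2"
proof -
  have "cmod s2 = 1 / sqrt 2" unfolding s2_def norm_of_real by simp
  thus ?thesis by (simp add: power_divide)
qed

lemma unit_x: "i \<noteq> j \<Longrightarrow> unitv (vec2 i j s2 s2)"
  by (rule unit_vec2) (simp_all add: cmod_s2)
lemma unit_y: "i \<noteq> j \<Longrightarrow> unitv (vec2 i j s2 (\<i> * s2))"
  by (rule unit_vec2) (simp_all add: cmod_s2 norm_mult)

lemma polar_formula:
  "M$i$j = qf M (vec2 i j s2 s2) - \<i> * qf M (vec2 i j s2 (\<i> * s2))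
          - (1-\<i>)/2 * (qf M (vec2 i i 1 0) + qf M (vec2 j j 1 0))"
  unfolding qf_vec2 by (simp add: cnj_s2 algebra_simps s2_sq flip: mult.assoc) (simp add: field_simps)

lemma polar_eq:
  assumes "\<And>v. unitv v \<Longrightarrow> qf M v = qf N v"
  shows "M = N"
proof -
  have "M$i$j = N$i$j" for i j
  proof (cases "i = j")
    case True
    then show ?thesis using assms[OF unit_e[of i]] by (simp add: qf_vec1)
  next
    case False
    show ?thesis
      by (subst (1 2) polar_formula) (simp add: assms unit_e unit_x[OF False] unit_y[OF False])
  qed
  thus ?thesis by (simp add: vec_eq_iff)
qed



lemma sum_pair: "(\<Sum>p\<in>UNIV. f p) = (\<Sum>a\<in>UNIV. \<Sum>b\<in>UNIV. f (a,b))"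
  by (simp add: sum.cartesian_product UNIV_Times_UNIV[symmetric] del: UNIV_Times_UNIV)

definition Lam :: "('a::finite \<times> 'b::finite) cmat \<Rightarrow> 'b cmat \<Rightarrow> 'a cmat" where
  "Lam \<rho> Y = (\<chi> c a. \<Sum>b'\<in>UNIV. \<Sum>d\<in>UNIV. Y$b'$d * \<rho>$(c,d)$(a,b'))"

lemma trace_kron_proj: "mtrace (kron (proj v) Y ** \<rho>) = qf (Lam \<rho> Y) v"
proof -
  have "mtrace (kron (proj v) Y ** \<rho>) =
     (\<Sum>a\<in>UNIV. \<Sum>b'\<in>UNIV. \<Sum>c\<in>UNIV. \<Sum>d\<in>UNIV. v$a * cnj (v$c) * Y$b'$d * \<rho>$(c,d)$(a,b'))"
    unfolding mtrace_def matrix_matrix_mult_def kron_def proj_def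
    by (simp add: sum_pair)
  also have "\<dots> = (\<Sum>a\<in>UNIV. \<Sum>c\<in>UNIV. \<Sum>b'\<in>UNIV. \<Sum>d\<in>UNIV. v$a * cnj (v$c) * Y$b'$d * \<rho>$(c,d)$(a,b'))"
    by (rule sum.cong[OF refl], rule sum.swap)
  also have "\<dots> = (\<Sum>c\<in>UNIV. \<Sum>a\<in>UNIV. \<Sum>b'\<in>UNIV. \<Sum>d\<in>UNIV. v$a * cnj (v$c) * Y$b'$d * \<rho>$(c,d)$(a,b'))"
    by (rule sum.swap)
  also have "\<dots> = qf (Lam \<rho> Y) v"
    unfolding qf_def Lam_def
    by (simp add: sum_distrib_left sum_distrib_right algebra_simps)
  finally show ?thesis .
qed

lemma trace_proj: "mtrace (\<sigma> ** proj v) = qf \<sigma> v"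
  unfolding mtrace_def matrix_matrix_mult_def proj_def qf_def
  by (simp add: algebra_simps)

definition Nm :: "'l pmf \<Rightarrow> ('l \<Rightarrow> 'a::finite cmat) \<Rightarrow> ('l \<Rightarrow> real) \<Rightarrow> 'a cmat" where
  "Nm P \<sigma> f = (\<chi> c a. integral\<^sup>L (measure_pmf P) (\<lambda>l. \<sigma> l $ c $ a * of_real (f l)))"

lemma integrable_entry:
  assumes "\<And>l. qstate (\<sigma> l)" "\<And>l. \<bar>f l\<bar> \<le> 1"
  shows "integrable (measure_pmf P) (\<lambda>l. \<sigma> l $ c $ a * of_real (f l))"
proof (rule int_bdd[where B=2])
  fix l
  have "cmod (\<sigma> l $ c $ a) * \<bar>f l\<bar> \<le> 2 * 1"
    by (rule mult_mono) (use qstate_bound[OF assms(1)] assms(2) in auto)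
  thus "norm (\<sigma> l $ c $ a * of_real (f l)) \<le> 2" by (simp add: norm_mult)
qed

lemma qf_Nm:
  assumes "\<And>l. qstate (\<sigma> l)" "\<And>l. \<bar>f l\<bar> \<le> 1"
  shows "qf (Nm P \<sigma> f) v = integral\<^sup>L (measure_pmf P) (\<lambda>l. qf (\<sigma> l) v * of_real (f l))"
proof -
  note ie = integrable_entry[OF assms]
  have "qf (Nm P \<sigma> f) v = (\<Sum>i\<in>UNIV. \<Sum>j\<in>UNIV.
      integral\<^sup>L (measure_pmf P) (\<lambda>l. cnj (v$i) * (\<sigma> l $ i $ j * of_real (f l)) * v$j))"
    unfolding qf_def Nm_def by (simp add: integral_mult_left_zero integral_mult_right_zero)
  also have "\<dots> = (\<Sum>i\<in>UNIV.
      integral\<^sup>L (measure_pmf P) (\<lambda>l. \<Sum>j\<in>UNIV. cnj (v$i) * (\<sigma> l $ i $ j * of_real (f l)) * v$j))"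
  proof (rule sum.cong[OF refl])
    fix i
    show "(\<Sum>j\<in>UNIV. integral\<^sup>L (measure_pmf P) (\<lambda>l. cnj (v$i) * (\<sigma> l $ i $ j * of_real (f l)) * v$j)) =
      integral\<^sup>L (measure_pmf P) (\<lambda>l. \<Sum>j\<in>UNIV. cnj (v$i) * (\<sigma> l $ i $ j * of_real (f l)) * v$j)"
      by (subst Bochner_Integration.integral_sum) (auto intro!: integrable_mult_left integrable_mult_right ie)
  qed
  also have "\<dots> = integral\<^sup>L (measure_pmf P) (\<lambda>l. \<Sum>i\<in>UNIV. \<Sum>j\<in>UNIV. cnj (v$i) * (\<sigma> l $ i $ j * of_real (f l)) * v$j)"
    by (subst Bochner_Integration.integral_sum) (auto intro!: integrable_sum integrable_mult_left integrable_mult_right ie)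
  also have "\<dots> = integral\<^sup>L (measure_pmf P) (\<lambda>l. qf (\<sigma> l) v * of_real (f l))"
    unfolding qf_def by (simp add: sum_distrib_right sum_distrib_left algebra_simps)
  finally show ?thesis .
qed

lemma lhs_alice:
  fixes \<rho> :: "('a::finite \<times> 'b::finite) cmat" and P :: "'l pmf"
  assumes st: "\<And>l. qstate (\<sigma> l)" and resp: "response r"
    and model: "\<forall>A B a b. is_povm A \<longrightarrow> is_povm B \<longrightarrow> a < fst A \<longrightarrow> b < fst B \<longrightarrow>
         joint_prob \<rho> A B a b =
           complex_of_real (measure_pmf.expectation P
             (\<lambda>l. Re (mtrace (\<sigma> l ** snd A a)) * r B l b))"
    and B: "is_povm B" "b < fst B"
  shows "Lam \<rho> (snd B b) = Nm P \<sigma> (\<lambda>l. r B l b)"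
proof (rule polar_eq)
  fix v :: "complex^'a" assume u: "unitv v"
  have rb: "\<And>l. \<bar>r B l b\<bar> \<le> 1" using resp_bounds[OF resp B] by (simp add: abs_le_iff)
  have "qf (Lam \<rho> (snd B b)) v = joint_prob \<rho> (pov v) B 0 b"
    unfolding joint_prob_def by (simp add: pov_def trace_kron_proj)
  also have "\<dots> = complex_of_real (measure_pmf.expectation P
             (\<lambda>l. Re (qf (\<sigma> l) v) * r B l b))"
  proof -
    have "joint_prob \<rho> (pov v) B 0 b = complex_of_real (measure_pmf.expectation P
             (\<lambda>l. Re (mtrace (\<sigma> l ** snd (pov v) 0)) * r B l b))"
      by (rule model[rule_format]) (use is_povm_pov[OF u] B in \<open>auto simp: pov_def\<close>)
    thus ?thesis by (simp add: pov_def trace_proj)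
  qed
  also have "\<dots> = integral\<^sup>L (measure_pmf P) (\<lambda>l. complex_of_real (Re (qf (\<sigma> l) v) * r B l b))"
    by (rule integral_complex_of_real[symmetric])
  also have "\<dots> = integral\<^sup>L (measure_pmf P) (\<lambda>l. qf (\<sigma> l) v * of_real (r B l b))"
  proof (rule Bochner_Integration.integral_cong[OF refl])
    fix l
    have "Im (qf (\<sigma> l) v) = 0" using st[of l] by (simp add: qstate_def psd_qf)
    hence "qf (\<sigma> l) v = of_real (Re (qf (\<sigma> l) v))" by (simp add: complex_eq_iff)
    thus "complex_of_real (Re (qf (\<sigma> l) v) * r B l b) = qf (\<sigma> l) v * of_real (r B l b)"
      by (metis of_real_mult)
  qed
  also have "\<dots> = qf (Nm P \<sigma> (\<lambda>l. r B l b)) v"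
    by (rule qf_Nm[symmetric]) (use st rb in auto)
  finally show "qf (Lam \<rho> (snd B b)) v = qf (Nm P \<sigma> (\<lambda>l. r B l b)) v" .
qed



lemma sum2: "(\<Sum>i\<in>(UNIV::2 set). f i) = f 1 + f 2"
  by (simp add: UNIV_2)

lemma psd2:
  fixes M :: "complex^2^2"
  assumes "M$1$1 = of_real p" "M$2$2 = of_real q" "M$2$1 = cnj (M$1$2)"
    "0 \<le> p" "0 \<le> q" "(cmod (M$1$2))^2 \<le> p * q"
  shows "psd M"
  unfolding psd_qf
proof
  fix v :: "complex^2"
  define w where "w = cnj (v$1) * M$1$2 * v$2"
  define A where "A = cmod (v$1)"
  define B where "B = cmod (v$2)"
  define t where "t = cmod (M$1$2)"
  have "qf M v = of_real p * (cnj (v$1) * v$1) + of_real q * (cnj (v$2) * v$2) + w + cnj w"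
    unfolding qf_def w_def using assms(1-3) by (simp add: sum2 algebra_simps)
  also have "\<dots> = of_real (p * A^2 + q * B^2 + 2 * Re w)"
  proof -
    have e: "\<And>z. cnj z * z = of_real ((cmod z)^2)" by (metis complex_norm_square mult.commute)
    have "w + cnj w = of_real (2 * Re w)" by (simp add: complex_add_cnj)
    thus ?thesis unfolding A_def B_def e by simp
  qed
  finally have qv: "qf M v = of_real (p * A^2 + q * B^2 + 2 * Re w)" .
  have cw: "cmod w = A * t * B" unfolding w_def A_def B_def t_def by (simp add: norm_mult)
  have "\<bar>Re w\<bar> \<le> A * t * B" using abs_Re_le_cmod[of w] cw by simp
  have tle: "t \<le> sqrt p * sqrt q"
    using assms(6) unfolding t_def by (metis real_le_rsqrt real_sqrt_mult)
  have "A * t * B \<le> A * (sqrt p * sqrt q) * B"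
    by (intro mult_right_mono mult_left_mono tle) (auto simp: A_def B_def)
  moreover have "2 * (A * (sqrt p * sqrt q) * B) \<le> p * A^2 + q * B^2"
  proof -
    have "0 \<le> (sqrt p * A - sqrt q * B)^2" by simp
    thus ?thesis using assms(4,5) by (simp add: power2_eq_square algebra_simps)
  qed
  ultimately have "0 \<le> p * A^2 + q * B^2 + 2 * Re w" using \<open>\<bar>Re w\<bar> \<le> A * t * B\<close> by linarith
  thus "Im (qf M v) = 0 \<and> 0 \<le> Re (qf M v)" using qv by simp
qed



definition bobst :: "real \<Rightarrow> real \<Rightarrow> real \<Rightarrow> real \<Rightarrow> complex^2^2" where
 "bobst \<mu> x y z = (\<chi> d e. if d = 1 then
     (if e = 1 then (1 - of_real \<mu>)/2 + of_real \<mu> * of_real z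
      else of_real \<mu> * (-1 + \<i>)/2 + of_real \<mu> * of_real x + (- \<i> * of_real \<mu>) * of_real y)
   else (if e = 1 then of_real \<mu> * (-1 - \<i>)/2 + of_real \<mu> * of_real x + (\<i> * of_real \<mu>) * of_real y
      else (1 + of_real \<mu>)/2 + (- of_real \<mu>) * of_real z))"

lemma two_ne_one: "(2::2) \<noteq> 1" by simp

lemma bobst_11: "bobst \<mu> x y z $ 1 $ 1 = (1 - of_real \<mu>)/2 + of_real \<mu> * of_real z"
  by (simp add: bobst_def)
lemma bobst_12: "bobst \<mu> x y z $ 1 $ 2 = of_real \<mu> * (-1 + \<i>)/2 + of_real \<mu> * of_real x + (- \<i> * of_real \<mu>) * of_real y"
  by (simp add: bobst_def)
lemma bobst_21: "bobst \<mu> x y z $ 2 $ 1 = of_real \<mu> * (-1 - \<i>)/2 + of_real \<mu> * of_real x + (\<i> * of_real \<mu>) * of_real y"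
  by (simp add: bobst_def)
lemma bobst_22: "bobst \<mu> x y z $ 2 $ 2 = (1 + of_real \<mu>)/2 + (- of_real \<mu>) * of_real z"
  by (simp add: bobst_def)

lemma sq_le1: "0 \<le> x \<Longrightarrow> x \<le> 1 \<Longrightarrow> (2 * x - 1)^2 \<le> (1::real)"
  by (simp add: abs_square_le_1)

lemma qstate_bobst:
  assumes "0 \<le> x" "x \<le> 1" "0 \<le> y" "y \<le> 1" "0 \<le> z" "z \<le> 1" "0 \<le> \<mu>" "\<mu> \<le> 1 / sqrt 3"
  shows "qstate (bobst \<mu> x y z)"
proof -
  have m1: "\<mu> \<le> 1" using assms(8) by (smt (verit) divide_le_eq_1 real_sqrt_ge_one)
  have msq: "\<mu>^2 \<le> 1/3"
  proof -
    have "\<mu>^2 \<le> (1 / sqrt 3)^2" by (rule power_mono) (use assms in auto)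
    thus ?thesis by (simp add: power_divide)
  qed
  define p where "p = (1 - \<mu>)/2 + \<mu> * z"
  define q where "q = (1 + \<mu>)/2 - \<mu> * z"
  have mz: "\<mu> * z \<le> \<mu>" using assms by (simp add: mult_left_le)
  have p0: "0 \<le> p" unfolding p_def using m1 assms by simp
  have q0: "0 \<le> q" unfolding q_def using m1 mz by simp
  have "\<mu>^2 * ((2*x-1)^2 + (2*y-1)^2 + (2*z-1)^2) \<le> \<mu>^2 * 3"
    by (rule mult_left_mono) (use sq_le1[OF assms(1,2)] sq_le1[OF assms(3,4)] sq_le1[OF assms(5,6)] in auto)
  also have "\<dots> \<le> 1" using msq by simp
  finally have key: "\<mu>^2 * ((2*x-1)^2 + (2*y-1)^2 + (2*z-1)^2) \<le> 1" .
  have "(cmod (bobst \<mu> x y z $ 1 $ 2))^2 = (\<mu> * x - \<mu>/2)^2 + (\<mu>/2 - \<mu> * y)^2"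
    unfolding bobst_12 cmod_power2 by (simp add: algebra_simps)
  also have "\<dots> \<le> p * q"
  proof -
    have e1: "p * q = (1 - \<mu>^2 * (2*z-1)^2)/4" unfolding p_def q_def by (simp add: power2_eq_square field_simps)
    have e2: "(\<mu> * x - \<mu>/2)^2 + (\<mu>/2 - \<mu> * y)^2 = \<mu>^2 * ((2*x-1)^2 + (2*y-1)^2) / 4"
      by (simp add: power2_eq_square field_simps)
    show ?thesis unfolding e1 e2 using key by (simp add: field_simps)
  qed
  finally have c: "(cmod (bobst \<mu> x y z $ 1 $ 2))^2 \<le> p * q" .
  have "psd (bobst \<mu> x y z)"
    by (rule psd2[OF _ _ _ p0 q0 c]) 
       (simp_all add: bobst_11 bobst_22 bobst_12 bobst_21 p_def q_def complex_eq_iff)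
  moreover have "mtrace (bobst \<mu> x y z) = 1"
    unfolding mtrace_def sum2 bobst_11 bobst_22 by (simp add: field_simps)
  ultimately show ?thesis by (simp add: qstate_def)
qed



lemma E_lin2:
  fixes s :: "'l \<Rightarrow> complex"
  assumes "integrable (measure_pmf P) s" "integrable (measure_pmf P) (\<lambda>l. s l * of_real (f l))"
  shows "integral\<^sup>L (measure_pmf P) (\<lambda>l. s l * (k0 + k1 * of_real (f l)))
       = k0 * integral\<^sup>L (measure_pmf P) s + k1 * integral\<^sup>L (measure_pmf P) (\<lambda>l. s l * of_real (f l))"
proof -
  have "(\<lambda>l. s l * (k0 + k1 * of_real (f l))) = (\<lambda>l. k0 * s l + k1 * (s l * of_real (f l)))"
    by (auto simp: algebra_simps)
  thus ?thesis using assms by (simp add: integral_mult_right_zero)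
qed

lemma E_lin3:
  fixes s :: "'l \<Rightarrow> complex"
  assumes "integrable (measure_pmf P) s" "integrable (measure_pmf P) (\<lambda>l. s l * of_real (f l))"
     "integrable (measure_pmf P) (\<lambda>l. s l * of_real (g l))"
  shows "integral\<^sup>L (measure_pmf P) (\<lambda>l. s l * (k0 + k1 * of_real (f l) + k2 * of_real (g l)))
       = k0 * integral\<^sup>L (measure_pmf P) s + k1 * integral\<^sup>L (measure_pmf P) (\<lambda>l. s l * of_real (f l))
         + k2 * integral\<^sup>L (measure_pmf P) (\<lambda>l. s l * of_real (g l))"
proof -
  have "(\<lambda>l. s l * (k0 + k1 * of_real (f l) + k2 * of_real (g l))) =
      (\<lambda>l. k0 * s l + k1 * (s l * of_real (f l)) + k2 * (s l * of_real (g l)))"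
    by (auto simp: algebra_simps)
  thus ?thesis using assms by (simp add: integral_mult_right_zero)
qed

lemma Lam_entry:
  fixes \<rho> :: "('a::finite \<times> 2) cmat"
  shows "Lam \<rho> Y $ c $ a = Y$1$1 * \<rho>$(c,1)$(a,1) + Y$1$2 * \<rho>$(c,2)$(a,1)
     + Y$2$1 * \<rho>$(c,1)$(a,2) + Y$2$2 * \<rho>$(c,2)$(a,2)"
  unfolding Lam_def by (simp add: sum2)

lemma s2_sq': "s2 * (s2 * x) = x / 2" by (simp add: mult.assoc[symmetric] s2_sq)

lemma vec2_1: "vec2 (1::2) 2 a b $ 1 = a" by (simp add: vec2_def)
lemma vec2_2: "vec2 (1::2) 2 a b $ 2 = b" by (simp add: vec2_def)

lemma proj_entry: "proj v $ i $ j = v$i * cnj (v$j)" by (simp add: proj_def)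

lemma one_ne_two: "(1::2) \<noteq> 2" by simp

definition ez :: "complex^2" where "ez = vec2 1 2 1 0"
definition ex :: "complex^2" where "ex = vec2 1 2 s2 s2"
definition ey :: "complex^2" where "ey = vec2 1 2 s2 (\<i> * s2)"

lemma unit_ez: "unitv ez" unfolding ez_def by (rule unit_vec2) auto
lemma unit_ex: "unitv ex" unfolding ex_def by (rule unit_x) simp
lemma unit_ey: "unitv ey" unfolding ey_def by (rule unit_y) simp

lemma rep_i:
  fixes \<rho> :: "('a::finite \<times> 2) cmat" and P :: "'l pmf"
  assumes st: "\<And>l. qstate (\<sigma> l)" and resp: "response r"
    and model: "\<forall>A B a b. is_povm A \<longrightarrow> is_povm B \<longrightarrow> a < fst A \<longrightarrow> b < fst B \<longrightarrow>
         joint_prob \<rho> A B a b =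
           complex_of_real (measure_pmf.expectation P
             (\<lambda>l. Re (mtrace (\<sigma> l ** snd A a)) * r B l b))"
  shows "(\<mu> *\<^sub>R \<rho> + (1 - \<mu>) *\<^sub>R kron (ptrace_B \<rho>) ((1/2) *\<^sub>R mat 1)) $ (c,d) $ (a,e)
     = integral\<^sup>L (measure_pmf P) (\<lambda>l. \<sigma> l $ c $ a *
          bobst \<mu> (r (pov ex) l 0) (r (pov ey) l 0) (r (pov ez) l 0) $ d $ e)"
proof -
  define S where "S f = integral\<^sup>L (measure_pmf P) (\<lambda>l. \<sigma> l $ c $ a * of_real (f l))" for f
  define S1 where "S1 = integral\<^sup>L (measure_pmf P) (\<lambda>l. \<sigma> l $ c $ a)"
  define rz where "rz l = r (pov ez) l 0" for l
  define rz1 where "rz1 l = r (pov ez) l 1" for l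
  define rx where "rx l = r (pov ex) l 0" for l
  define ry where "ry l = r (pov ey) l 0" for l
  define R where "R d e = \<rho>$(c,d)$(a,e)" for d e
  have povs: "is_povm (pov ez)" "is_povm (pov ex)" "is_povm (pov ey)"
    using is_povm_pov unit_ez unit_ex unit_ey by auto
  have fpov: "fst (pov v) = 2" for v :: "complex^2" by (simp add: pov_def)
  have rb: "\<bar>r (pov v) l b\<bar> \<le> 1" if "is_povm (pov v)" "b < 2" for v l b
    using resp_bounds[OF resp that(1), of b l] that(2) by (simp add: fpov)
  have intS1: "integrable (measure_pmf P) (\<lambda>l. \<sigma> l $ c $ a)"
    by (rule int_bdd[where B=2]) (simp add: qstate_bound st)
  have intS: "integrable (measure_pmf P) (\<lambda>l. \<sigma> l $ c $ a * of_real (r (pov v) l b))"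
    if "is_povm (pov v)" "b < 2" for v b
    by (rule integrable_entry[OF st]) (use rb[OF that] in auto)
  have L: "Lam \<rho> (snd (pov v) b) $ c $ a = S (\<lambda>l. r (pov v) l b)"
    if "is_povm (pov v)" "b < 2" for v b
    using lhs_alice[OF st resp model that(1), of b] that(2)
    by (simp add: fpov Nm_def S_def)
  have Z0: "R 1 1 = S rz"
    using L[OF povs(1), of 0] unfolding rz_def R_def
    by (simp add: pov_def Lam_entry proj_entry ez_def vec2_1 vec2_2)
  have Z1: "R 2 2 = S rz1"
    using L[OF povs(1), of 1] unfolding rz1_def R_def
    by (simp add: pov_def Lam_entry proj_entry ez_def vec2_1 vec2_2 mat_def)
  have X: "(R 1 1 + R 1 2 + R 2 1 + R 2 2)/2 = S rx"
    using L[OF povs(2), of 0] unfolding rx_def R_def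
    by (simp add: pov_def Lam_entry proj_entry ex_def vec2_1 vec2_2 cnj_s2 s2_sq) (simp add: field_simps)
  have Ly: "Lam \<rho> (proj ey) $ c $ a = (R 1 1 + R 2 2 + \<i> * R 1 2 - \<i> * R 2 1)/2"
    unfolding R_def Lam_entry proj_entry ey_def vec2_1 vec2_2
    by (simp add: cnj_s2 mult.assoc s2_sq' s2_sq algebra_simps)
  have Y: "(R 1 1 + R 2 2 + \<i> * R 1 2 - \<i> * R 2 1)/2 = S ry"
    using L[OF povs(3), of 0] unfolding ry_def Ly[symmetric]
    by (simp add: pov_def)
  have rsum: "rz l + rz1 l = 1" for l
  proof -
    have "(\<Sum>x<fst (pov ez). r (pov ez) l x) = 1" using resp povs(1) unfolding response_def by blast
    thus ?thesis by (simp add: fpov rz_def rz1_def numeral_2_eq_2)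
  qed
  have T: "S rz + S rz1 = S1"
  proof -
    have "S rz + S rz1 = integral\<^sup>L (measure_pmf P) (\<lambda>l. \<sigma> l $ c $ a * of_real (rz l) + \<sigma> l $ c $ a * of_real (rz1 l))"
      unfolding S_def rz_def rz1_def using intS[OF povs(1)] by simp
    also have "\<dots> = S1" unfolding S1_def
      by (rule Bochner_Integration.integral_cong[OF refl]) (simp add: rsum flip: distrib_left of_real_add)
    finally show ?thesis .
  qed
  have ptr: "ptrace_B \<rho> $ c $ a = R 1 1 + R 2 2" unfolding ptrace_B_def R_def by (simp add: sum2)
  have lhs: "(\<mu> *\<^sub>R \<rho> + (1 - \<mu>) *\<^sub>R kron (ptrace_B \<rho>) ((1/2) *\<^sub>R mat 1)) $ (c,d) $ (a,e)
      = of_real \<mu> * R d e + of_real (1 - \<mu>) * ((R 1 1 + R 2 2) * (if d = e then 1/2 else 0))"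
    by (simp add: kron_def vector_scaleR_component mat_def, simp add: ptr R_def scaleR_conv_of_real)
  note iS = intS[OF povs(1), of 0, folded rz_def, simplified] intS[OF povs(2), of 0, folded rx_def, simplified]
    intS[OF povs(3), of 0, folded ry_def, simplified]
  have S1R: "S1 = R 1 1 + R 2 2" using T Z0 Z1 by simp
  have C11: ?thesis if de: "d = 1" "e = 1"
  proof -
    have "integral\<^sup>L (measure_pmf P) (\<lambda>l. \<sigma> l $ c $ a * bobst \<mu> (rx l) (ry l) (rz l) $ d $ e)
        = (1 - of_real \<mu>)/2 * S1 + of_real \<mu> * S rz"
      unfolding de bobst_11 S1_def S_def by (rule E_lin2[OF intS1 iS(1)])
    also have "\<dots> = of_real \<mu> * R 1 1 + of_real (1 - \<mu>) * ((R 1 1 + R 2 2) * (1/2))"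
      unfolding S1R Z0[symmetric] by (simp add: field_simps)
    finally show ?thesis unfolding lhs rx_def[symmetric] ry_def[symmetric] rz_def[symmetric] using de
      by simp
  qed
  have C12: ?thesis if de: "d = 1" "e = 2"
  proof -
    have "integral\<^sup>L (measure_pmf P) (\<lambda>l. \<sigma> l $ c $ a * bobst \<mu> (rx l) (ry l) (rz l) $ d $ e)
        = of_real \<mu> * (-1 + \<i>)/2 * S1 + of_real \<mu> * S rx + (- \<i> * of_real \<mu>) * S ry"
      unfolding de bobst_12 S1_def S_def by (rule E_lin3[OF intS1 iS(2) iS(3)])
    also have "\<dots> = of_real \<mu> * R 1 2"
      unfolding S1R X[symmetric] Y[symmetric] by (simp add: field_simps)
    finally show ?thesis unfolding lhs rx_def[symmetric] ry_def[symmetric] rz_def[symmetric] using de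
      by simp
  qed
  have C21: ?thesis if de: "d = 2" "e = 1"
  proof -
    have "integral\<^sup>L (measure_pmf P) (\<lambda>l. \<sigma> l $ c $ a * bobst \<mu> (rx l) (ry l) (rz l) $ d $ e)
        = of_real \<mu> * (-1 - \<i>)/2 * S1 + of_real \<mu> * S rx + (\<i> * of_real \<mu>) * S ry"
      unfolding de bobst_21 S1_def S_def by (rule E_lin3[OF intS1 iS(2) iS(3)])
    also have "\<dots> = of_real \<mu> * R 2 1"
      unfolding S1R X[symmetric] Y[symmetric] by (simp add: field_simps)
    finally show ?thesis unfolding lhs rx_def[symmetric] ry_def[symmetric] rz_def[symmetric] using de
      by simp
  qed
  have C22: ?thesis if de: "d = 2" "e = 2"
  proof -
    have "integral\<^sup>L (measure_pmf P) (\<lambda>l. \<sigma> l $ c $ a * bobst \<mu> (rx l) (ry l) (rz l) $ d $ e)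
        = (1 + of_real \<mu>)/2 * S1 + (- of_real \<mu>) * S rz"
      unfolding de bobst_22 S1_def S_def by (rule E_lin2[OF intS1 iS(1)])
    also have "\<dots> = of_real \<mu> * R 2 2 + of_real (1 - \<mu>) * ((R 1 1 + R 2 2) * (1/2))"
      unfolding S1R Z0[symmetric] by (simp add: field_simps)
    finally show ?thesis unfolding lhs rx_def[symmetric] ry_def[symmetric] rz_def[symmetric] using de
      by simp
  qed
  show ?thesis using exhaust_2[of d] exhaust_2[of e] C11 C12 C21 C22 by blast
qed



lemma cont_qf: "continuous_on UNIV (\<lambda>M::'n::finite cmat. qf M v)"
  unfolding qf_def by (intro continuous_intros continuous_on_component continuous_on_id)

lemma cont_trace: "continuous_on UNIV (\<lambda>M::'n::finite cmat. mtrace M)"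
  unfolding mtrace_def by (intro continuous_intros continuous_on_component continuous_on_id)

lemma closed_states: "closed {M :: 'n::finite cmat. qstate M}"
proof -
  have "{M :: 'n cmat. qstate M} =
    (\<Inter>v. {M. Im (qf M v) = 0} \<inter> {M. 0 \<le> Re (qf M v)}) \<inter> {M. mtrace M = 1}"
    by (auto simp: qstate_def psd_qf)
  moreover have "closed \<dots>"
    by (intro closed_Int closed_INT ballI closed_Collect_eq closed_Collect_le
        continuous_intros cont_qf cont_trace continuous_on_Re continuous_on_Im)
  ultimately show ?thesis by simp
qed

lemma bounded_states: "bounded {M :: 'n::finite cmat. qstate M}"
  unfolding bounded_iff
proof (intro exI ballI)
  fix M :: "'n cmat" assume "M \<in> {M. qstate M}"
  hence q: "qstate M" by simp
  have "norm M \<le> (\<Sum>i\<in>UNIV. norm (M$i))" unfolding norm_vec_def by (rule L2_set_le_sum) simp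
  also have "\<dots> \<le> (\<Sum>i\<in>(UNIV::'n set). \<Sum>j\<in>(UNIV::'n set). 2)"
  proof (rule sum_mono)
    fix i
    have "norm (M$i) \<le> (\<Sum>j\<in>UNIV. norm (M$i$j))" unfolding norm_vec_def by (rule L2_set_le_sum) simp
    also have "\<dots> \<le> (\<Sum>j\<in>(UNIV::'n set). 2)" by (rule sum_mono) (simp add: qstate_bound[OF q])
    finally show "norm (M$i) \<le> (\<Sum>j\<in>(UNIV::'n set). 2)" .
  qed
  finally show "norm M \<le> (\<Sum>i\<in>(UNIV::'n set). \<Sum>j\<in>(UNIV::'n set). 2)" .
qed

lemma compact_states: "compact {M :: 'n::finite cmat. qstate M}"
  using closed_states bounded_states by (simp add: compact_eq_bounded_closed)

lemma cont_kron: "continuous_on UNIV (\<lambda>p :: 'a::finite cmat \<times> 'b::finite cmat. kron (fst p) (snd p))"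
  unfolding kron_def
  by (intro continuous_on_vec_lambda continuous_intros continuous_on_component continuous_on_fst continuous_on_snd continuous_on_id)

lemma kron_entry: "kron X Y $ p $ q = X $ fst p $ fst q * Y $ snd p $ snd q"
  by (simp add: kron_def)

lemma sep_from_int:
  fixes \<tau> :: "('a::finite \<times> 'b::finite) cmat" and P :: "'l pmf"
    and \<sigma> :: "'l \<Rightarrow> 'a cmat" and \<beta> :: "'l \<Rightarrow> 'b cmat"
  assumes st: "\<And>l. qstate (\<sigma> l)" and sb: "\<And>l. qstate (\<beta> l)"
    and rep: "\<And>c d a e. \<tau> $ (c,d) $ (a,e) = integral\<^sup>L (measure_pmf P) (\<lambda>l. \<sigma> l $ c $ a * \<beta> l $ d $ e)"
  shows "separable \<tau>"
proof -
  define QA where "QA = {M :: 'a cmat. qstate M}"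
  define QB where "QB = {M :: 'b cmat. qstate M}"
  define K where "K = (\<lambda>p. kron (fst p) (snd p)) ` (QA \<times> QB)"
  define C where "C = convex hull K"
  have cK: "compact K" unfolding K_def
  proof (rule compact_continuous_image)
    show "continuous_on (QA \<times> QB) (\<lambda>p. kron (fst p) (snd p))"
      by (rule continuous_on_subset[OF cont_kron]) simp
    show "compact (QA \<times> QB)" unfolding QA_def QB_def by (intro compact_Times compact_states)
  qed
  have cC: "compact C" unfolding C_def by (rule compact_convex_hull[OF cK])
  define f where "f l = kron (\<sigma> l) (\<beta> l)" for l
  have fK: "f l \<in> K" for l
  proof -
    have m: "(\<sigma> l, \<beta> l) \<in> QA \<times> QB" unfolding QA_def QB_def using st[of l] sb[of l] by blast
    have e: "f l = (\<lambda>p. kron (fst p) (snd p)) (\<sigma> l, \<beta> l)" unfolding f_def by simp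
    show ?thesis unfolding K_def e by (rule imageI[OF m])
  qed
  have fC: "f l \<in> C" for l unfolding C_def by (rule hull_inc[OF fK])
  have bdd: "cmod (f l $ p $ q) \<le> 4" for l p q
  proof -
    have "cmod (f l $ p $ q) = cmod (\<sigma> l $ fst p $ fst q) * cmod (\<beta> l $ snd p $ snd q)"
      by (simp add: f_def kron_entry norm_mult)
    also have "\<dots> \<le> 2 * 2" by (rule mult_mono) (auto simp: qstate_bound st sb)
    finally show ?thesis by simp
  qed
  have intf: "integrable (measure_pmf P) (\<lambda>l. f l $ p $ q)" for p q
    by (rule int_bdd[where B=4]) (simp add: bdd)
  have repf: "\<tau> $ p $ q = integral\<^sup>L (measure_pmf P) (\<lambda>l. f l $ p $ q)" for p q
    using rep[of "fst p" "snd p" "fst q" "snd q"] by (simp add: f_def kron_entry)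
  show ?thesis
  proof (cases "\<tau> \<in> C")
    case False
    obtain a b where ab: "inner a \<tau> < b" "\<forall>x\<in>C. b < inner a x"
      using separating_hyperplane_closed_point[OF convex_convex_hull[of K] compact_imp_closed[OF cC[unfolded C_def]]]
        False unfolding C_def by blast
    have inn: "inner a x = (\<Sum>p\<in>UNIV. \<Sum>q\<in>UNIV. Re (a$p$q) * Re (x$p$q) + Im (a$p$q) * Im (x$p$q))"
      for x :: "('a \<times> 'b) cmat"
      by (simp add: inner_vec_def inner_complex_def)
    have "inner a \<tau> = (\<Sum>p\<in>UNIV. \<Sum>q\<in>UNIV. Re (a$p$q) * integral\<^sup>L (measure_pmf P) (\<lambda>l. Re (f l $p$q))
         + Im (a$p$q) * integral\<^sup>L (measure_pmf P) (\<lambda>l. Im (f l $p$q)))"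
      unfolding inn repf by (simp add: integral_Re integral_Im intf)
    also have "\<dots> = (\<Sum>p\<in>UNIV. \<Sum>q\<in>UNIV. integral\<^sup>L (measure_pmf P) (\<lambda>l. Re (a$p$q) * Re (f l $p$q)
         + Im (a$p$q) * Im (f l $p$q)))"
      by (simp add: integrable_Re integrable_Im intf)
    also have "\<dots> = (\<Sum>p\<in>UNIV. integral\<^sup>L (measure_pmf P) (\<lambda>l. \<Sum>q\<in>UNIV. Re (a$p$q) * Re (f l $p$q)
         + Im (a$p$q) * Im (f l $p$q)))"
      by (subst Bochner_Integration.integral_sum) (auto intro!: integrable_Re integrable_Im intf)
    also have "\<dots> = integral\<^sup>L (measure_pmf P) (\<lambda>l. \<Sum>p\<in>UNIV. \<Sum>q\<in>UNIV. Re (a$p$q) * Re (f l $p$q)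
         + Im (a$p$q) * Im (f l $p$q))"
      by (rule Bochner_Integration.integral_sum[symmetric]) (auto intro!: Bochner_Integration.integrable_sum Bochner_Integration.integrable_add Bochner_Integration.integrable_mult_right integrable_Re integrable_Im intf)
    also have "\<dots> = integral\<^sup>L (measure_pmf P) (\<lambda>l. inner a (f l))"
      unfolding inn ..
    finally have ie: "inner a \<tau> = integral\<^sup>L (measure_pmf P) (\<lambda>l. inner a (f l))" .
    have "b \<le> integral\<^sup>L (measure_pmf P) (\<lambda>l. inner a (f l))"
    proof (rule measure_pmf.integral_ge_const)
      show "integrable (measure_pmf P) (\<lambda>l. inner a (f l))"
        unfolding inn by (intro Bochner_Integration.integrable_sum Bochner_Integration.integrable_add Bochner_Integration.integrable_mult_right integrable_Re integrable_Im intf)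
      show "AE x in measure_pmf P. b \<le> inner a (f x)"
        using ab(2) fC by (auto intro: less_imp_le)
    qed
    thus ?thesis using ie ab(1) by simp
  next
    case True
    then obtain S u where S: "finite S" "S \<subseteq> K" "\<forall>x\<in>S. 0 \<le> u x" "sum u S = 1"
      "(\<Sum>v\<in>S. u v *\<^sub>R v) = \<tau>"
      unfolding C_def convex_hull_explicit by blast
    obtain h where h: "bij_betw h {0..<card S} S" using ex_bij_betw_nat_finite[OF S(1)] by blast
    have ex: "\<exists>p. p \<in> QA \<times> QB \<and> v = kron (fst p) (snd p)" if "v \<in> K" for v
      using that unfolding K_def by blast
    define g where "g v = (SOME p. p \<in> QA \<times> QB \<and> v = kron (fst p) (snd p))" for v
    have g: "g v \<in> QA \<times> QB \<and> v = kron (fst (g v)) (snd (g v))" if "v \<in> K" for v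
      unfolding g_def by (rule someI_ex[OF ex[OF that]])
    have hS: "h i \<in> S" if "i < card S" for i using h that by (auto simp: bij_betw_def)
    define n where "n = card S"
    define pp where "pp i = u (h i)" for i
    define sA where "sA i = fst (g (h i))" for i
    define sB where "sB i = snd (g (h i))" for i
    have c1: "\<forall>i<n. pp i \<ge> 0 \<and> qstate (sA i) \<and> qstate (sB i)"
    proof (intro allI impI)
      fix i assume "i < n"
      hence hi: "h i \<in> K" "h i \<in> S" using hS S(2) unfolding n_def by auto
      show "pp i \<ge> 0 \<and> qstate (sA i) \<and> qstate (sB i)"
        using g[OF hi(1)] S(3) hi(2) unfolding pp_def sA_def sB_def QA_def QB_def by auto
    qed
    have c2: "(\<Sum>i<n. pp i) = 1"
      using sum.reindex_bij_betw[OF h, of u] S(4) unfolding pp_def n_def by (simp add: lessThan_atLeast0)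
    have "(\<Sum>i<n. pp i *\<^sub>R kron (sA i) (sB i)) = (\<Sum>i<n. u (h i) *\<^sub>R h i)"
    proof (rule sum.cong[OF refl])
      fix i assume "i \<in> {..<n}"
      hence hi: "h i \<in> K" using hS S(2) unfolding n_def by auto
      show "pp i *\<^sub>R kron (sA i) (sB i) = u (h i) *\<^sub>R h i"
        using g[OF hi] unfolding pp_def sA_def sB_def by simp
    qed
    also have "\<dots> = (\<Sum>v\<in>S. u v *\<^sub>R v)"
      using sum.reindex_bij_betw[OF h, of "\<lambda>v. u v *\<^sub>R v"] unfolding n_def by (simp add: lessThan_atLeast0)
    finally have c3: "\<tau> = (\<Sum>i<n. pp i *\<^sub>R kron (sA i) (sB i))" using S(5) by simp
    show ?thesis unfolding separable_def using c1 c2 c3 by blast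
  qed
qed



lemma part_i:
  fixes \<rho> :: "('a::finite \<times> 2) cmat"
  assumes mu: "0 \<le> \<mu>" "\<mu> \<le> 1 / sqrt 3" and u: "unsteerable_B_to_A TYPE('l) \<rho>"
  shows "separable (\<mu> *\<^sub>R \<rho> + (1 - \<mu>) *\<^sub>R kron (ptrace_B \<rho>) ((1/2) *\<^sub>R mat 1))"
proof -
  obtain P :: "'l pmf" and \<sigma> :: "'l \<Rightarrow> 'a cmat" and r :: "2 povm \<Rightarrow> 'l \<Rightarrow> nat \<Rightarrow> real" where
    st: "\<And>l. qstate (\<sigma> l)" and resp: "response r" and
    model: "\<forall>A B a b. is_povm A \<longrightarrow> is_povm B \<longrightarrow> a < fst A \<longrightarrow> b < fst B \<longrightarrow>
         joint_prob \<rho> A B a b =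
           complex_of_real (measure_pmf.expectation P
             (\<lambda>l. Re (mtrace (\<sigma> l ** snd A a)) * r B l b))"
    using u unfolding unsteerable_B_to_A_def by blast
  have rb: "0 \<le> r (pov v) l 0 \<and> r (pov v) l 0 \<le> 1" if "unitv v" for v :: "complex^2" and l
    using resp_bounds[OF resp is_povm_pov[OF that], of 0 l] by (simp add: pov_def)
  have sb: "qstate (bobst \<mu> (r (pov ex) l 0) (r (pov ey) l 0) (r (pov ez) l 0))" for l
    using rb[OF unit_ex, of l] rb[OF unit_ey, of l] rb[OF unit_ez, of l] mu
    by (intro qstate_bobst) auto
  show ?thesis
    by (rule sep_from_int[OF st sb]) (rule rep_i[OF st resp model])
qed

definition swapm :: "('a::finite \<times> 'b::finite) cmat \<Rightarrow> ('b \<times> 'a) cmat" where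
  "swapm \<rho> = (\<chi> p q. \<rho> $ prod.swap p $ prod.swap q)"

lemma sum_swap_univ: "(\<Sum>p\<in>UNIV. g (prod.swap p)) = (\<Sum>p\<in>UNIV. g p)"
  by (rule sum.reindex_bij_witness[of _ prod.swap prod.swap]) auto

lemma joint_prob_swap:
  "joint_prob (swapm \<rho>) B A b a = joint_prob \<rho> A B a b"
proof -
  have "joint_prob (swapm \<rho>) B A b a =
    (\<Sum>p\<in>UNIV. \<Sum>q\<in>UNIV. kron (snd B b) (snd A a) $ p $ q * \<rho> $ prod.swap q $ prod.swap p)"
    unfolding joint_prob_def mtrace_def matrix_matrix_mult_def swapm_def by simp
  also have "\<dots> = (\<Sum>p\<in>UNIV. \<Sum>q\<in>UNIV. kron (snd B b) (snd A a) $ prod.swap p $ prod.swap q * \<rho> $ q $ p)"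
    by (subst sum_swap_univ[symmetric], rule sum.cong[OF refl], subst sum_swap_univ[symmetric]) simp
  also have "\<dots> = joint_prob \<rho> A B a b"
    unfolding joint_prob_def mtrace_def matrix_matrix_mult_def by (simp add: kron_def mult.commute)
  finally show ?thesis .
qed

lemma unsteer_swap:
  assumes "unsteerable_A_to_B TYPE('l) (\<rho> :: ('a::finite \<times> 'b::finite) cmat)"
  shows "unsteerable_B_to_A TYPE('l) (swapm \<rho>)"
proof -
  obtain P :: "'l pmf" and r :: "'a povm \<Rightarrow> 'l \<Rightarrow> nat \<Rightarrow> real" and \<sigma> :: "'l \<Rightarrow> 'b cmat" where
    st: "\<forall>l. qstate (\<sigma> l)" and resp: "response r" and
    model: "\<forall>A B a b. is_povm A \<longrightarrow> is_povm B \<longrightarrow> a < fst A \<longrightarrow> b < fst B \<longrightarrow>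
         joint_prob \<rho> A B a b =
           complex_of_real (measure_pmf.expectation P
             (\<lambda>l. r A l a * Re (mtrace (\<sigma> l ** snd B b))))"
    using assms unfolding unsteerable_A_to_B_def by blast
  show ?thesis unfolding unsteerable_B_to_A_def
  proof (intro exI conjI)
    show "\<forall>l. qstate (\<sigma> l)" by (rule st)
    show "response r" by (rule resp)
    show "\<forall>A B a b. is_povm A \<longrightarrow> is_povm B \<longrightarrow> a < fst A \<longrightarrow> b < fst B \<longrightarrow>
         joint_prob (swapm \<rho>) A B a b =
           complex_of_real (measure_pmf.expectation P
             (\<lambda>l. Re (mtrace (\<sigma> l ** snd A a)) * r B l b))"
      using model by (simp add: joint_prob_swap mult.commute)
  qed
qed

lemma swap_tau:
  fixes \<rho> :: "(2 \<times> 'd::finite) cmat"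
  shows "swapm (\<mu> *\<^sub>R \<rho> + (1 - \<mu>) *\<^sub>R kron ((1/2) *\<^sub>R mat 1) (ptrace_A \<rho>))
    = \<mu> *\<^sub>R swapm \<rho> + (1 - \<mu>) *\<^sub>R kron (ptrace_B (swapm \<rho>)) ((1/2) *\<^sub>R mat 1)"
  by (simp add: vec_eq_iff swapm_def kron_def ptrace_A_def ptrace_B_def mult.commute)

lemma swapm_swapm: "swapm (swapm \<rho>) = \<rho>"
  by (simp add: vec_eq_iff swapm_def)

lemma swapm_sum: "swapm (\<Sum>i<n. p i *\<^sub>R kron (A i) (B i)) = (\<Sum>i<n. p i *\<^sub>R kron (B i) (A i))"
  by (simp add: vec_eq_iff swapm_def sum_component kron_def mult.commute)

lemma sep_swap:
  assumes "separable (swapm \<tau>)"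
  shows "separable \<tau>"
proof -
  obtain n :: nat and p A B where h: "\<forall>i<n. p i \<ge> 0 \<and> qstate (A i) \<and> qstate (B i)" "(\<Sum>i<n. p i) = 1"
    "swapm \<tau> = (\<Sum>i<n. p i *\<^sub>R kron (A i) (B i))"
    using assms unfolding separable_def by (elim exE conjE) (rule that; assumption)
  have "\<tau> = swapm (swapm \<tau>)" by (simp only: swapm_swapm)
  also have "\<dots> = swapm (\<Sum>i<n. p i *\<^sub>R kron (A i) (B i))" by (simp only: h(3))
  also have "\<dots> = (\<Sum>i<n. p i *\<^sub>R kron (B i) (A i))" by (rule swapm_sum)
  finally have e: "\<tau> = (\<Sum>i<n. p i *\<^sub>R kron (B i) (A i))" .
  have c1: "\<forall>i<n. p i \<ge> 0 \<and> qstate (B i) \<and> qstate (A i)" using h(1) by simp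
  show ?thesis unfolding separable_def
    by (intro exI[where x=n] exI[where x=p] exI[where x=B] exI[where x=A] conjI c1 h(2) e)
qed

theorem mainTheorem3:
  fixes \<rho>1 :: "('d::finite \<times> 2) cmat" and \<rho>2 :: "(2 \<times> 'd) cmat"
    and \<mu>1 \<mu>2 :: real
  assumes "CARD('d) \<ge> 2"
  shows "(qstate \<rho>1 \<and> 0 \<le> \<mu>1 \<and> \<mu>1 \<le> 1 / sqrt 3 \<and>
          entangled (\<mu>1 *\<^sub>R \<rho>1 + (1 - \<mu>1) *\<^sub>R kron (ptrace_B \<rho>1) ((1/2) *\<^sub>R mat 1))
          \<longrightarrow> steerable_B_to_A TYPE('l) \<rho>1)
       \<and> (qstate \<rho>2 \<and> 0 \<le> \<mu>2 \<and> \<mu>2 \<le> 1 / sqrt 3 \<and>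
          entangled (\<mu>2 *\<^sub>R \<rho>2 + (1 - \<mu>2) *\<^sub>R kron ((1/2) *\<^sub>R mat 1) (ptrace_A \<rho>2))
          \<longrightarrow> steerable_A_to_B TYPE('l) \<rho>2)"
proof (intro conjI impI)
  assume h: "qstate \<rho>1 \<and> 0 \<le> \<mu>1 \<and> \<mu>1 \<le> 1 / sqrt 3 \<and>
          entangled (\<mu>1 *\<^sub>R \<rho>1 + (1 - \<mu>1) *\<^sub>R kron (ptrace_B \<rho>1) ((1/2) *\<^sub>R mat 1))"
  show "steerable_B_to_A TYPE('l) \<rho>1"
  proof
    assume u: "unsteerable_B_to_A TYPE('l) \<rho>1"
    have "separable (\<mu>1 *\<^sub>R \<rho>1 + (1 - \<mu>1) *\<^sub>R kron (ptrace_B \<rho>1) ((1/2) *\<^sub>R mat 1))"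
      by (rule part_i[OF _ _ u]) (use h in auto)
    thus False using h unfolding entangled_def by blast
  qed
next
  assume h: "qstate \<rho>2 \<and> 0 \<le> \<mu>2 \<and> \<mu>2 \<le> 1 / sqrt 3 \<and>
          entangled (\<mu>2 *\<^sub>R \<rho>2 + (1 - \<mu>2) *\<^sub>R kron ((1/2) *\<^sub>R mat 1) (ptrace_A \<rho>2))"
  show "steerable_A_to_B TYPE('l) \<rho>2"
  proof
    assume "unsteerable_A_to_B TYPE('l) \<rho>2"
    hence u: "unsteerable_B_to_A TYPE('l) (swapm \<rho>2)" by (rule unsteer_swap)
    have "separable (\<mu>2 *\<^sub>R swapm \<rho>2 + (1 - \<mu>2) *\<^sub>R kron (ptrace_B (swapm \<rho>2)) ((1/2) *\<^sub>R mat 1))"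
      by (rule part_i[OF _ _ u]) (use h in auto)
    hence "separable (\<mu>2 *\<^sub>R \<rho>2 + (1 - \<mu>2) *\<^sub>R kron ((1/2) *\<^sub>R mat 1) (ptrace_A \<rho>2))"
      unfolding swap_tau[symmetric] by (rule sep_swap)
    thus False using h unfolding entangled_def by blast
  qed
qed


end
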